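(* Let $\mathcal{V}$ and $\mathcal{X}$ be finite sets, let $k\ge1$, $T\ge1$ be integers, and let $f:2^{\mathcal{V}\times\mathcal{X}}\to\mathbb{R}_{\ge0}$ satisfy $f(\emptyset)=0$ and be monotone and submodular: for all $W_1\subseteq W_2\subseteq\mathcal{V}\times\mathcal{X}$ and all $W\subseteq\mathcal{V}\times\mathcal{X}$, $f(W_2)\ge f(W_1)$ and $\Delta(W\mid W_1)\ge\Delta(W\mid W_2)$, where $\Delta(A\mid S)=f(S\cup A)-f(S)$. Suppose moreover there is a constant $C(k)>0$ such that for every $x\in\mathcal{X}$ and every $S\subseteq\mathcal{V}\times\mathcal{X}$ there exists $R(x,S)\subseteq\mathcal{V}$ with $|R(x,S)|\le k$ and $$\Delta\big(R(x,S)\times\{x\}\mid S\big)\ge C(k)\,\Delta\big(\mathcal{V}\times\{x\}\mid S\big).$$ Define the two-stage greedy sequence by $S_0=\emptyset$ and, for $t=1,\dots,T$, $$x_t\in\arg\max_{x\in\mathcal{X}}\Delta(\mathcal{V}\times\{x\}\mid S_{t-1}),\qquad R_t\in\arg\max_{R\subseteq\mathcal{V},\,|R|\le k}\Delta(R\times\{x_t\}\mid S_{t-1}),\qquad S_t=S_{t-1}\cup(R_t\times\{x_t\}).$$ Then for every sequence $(R_1^*,x_1^* ),\dots,(R_T^*,x_T^* )$ with $R_t^*\subseteq\mathcal{V}$, $|R_t^*|\le k$ and pairwise distinct $x_1^*,\dots,x_T^*\in\mathcal{X}$, setting $S_T^*=\bigcup_{t=1}^T R_t^*\times\{x_t^*\}$,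 $$f(S_T^* )\le\frac{2}{1-e^{-2C(k)}}\,f(S_T).$$
   Context: A pair $(R,x)$ with $R\subseteq\mathcal{V}$ (respondents), $x\in\mathcal{X}$ (query) is identified with the set $R\times\{x\}\subseteq\mathcal{V}\times\mathcal{X}$; histories are unions of such sets. The first stage chooses the query that would be most informative if asked to all respondents; the second stage chooses at most $k$ respondents for that query. *)

theory Defs
  imports Complex_Main
begin

definition marg :: "('a set \<Rightarrow> real) \<Rightarrow> 'a set \<Rightarrow> 'a set \<Rightarrow> real" where
  "marg f A S = f (S \<union> A) - f S"

end

theory Submission
  imports Defs
begin

lemma marg_union_le:
  fixes f :: "'a set \<Rightarrow> real"
  assumes fin: "finite J"
    and sub: "\<And>W1 W2 W. W1 \<subseteq> W2 \<Longrightarrow> W2 \<subseteq> Om \<Longrightarrow> W \<subseteq> Om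
                     \<Longrightarrow> marg f W W1 \<ge> marg f W W2"
    and A: "A \<subseteq> Om" and B: "\<forall>j\<in>J. B j \<subseteq> Om"
  shows "f (A \<union> \<Union>(B ` J)) - f A \<le> (\<Sum>j\<in>J. f (A \<union> B j) - f A)"
  using fin B
proof (induction J rule: finite_induct)
  case empty
  then show ?case by simp
next
  case (insert i J)
  have U: "A \<union> \<Union>(B ` J) \<subseteq> Om" using A insert.prems by auto
  have "marg f (B i) (A \<union> \<Union>(B ` J)) \<le> marg f (B i) A"
    using sub[of A "A \<union> \<Union>(B ` J)" "B i"] U insert.prems by auto
  then have "f (A \<union> \<Union>(B ` insert i J)) - f (A \<union> \<Union>(B ` J)) \<le> f (A \<union> B i) - f A"
    unfolding marg_def by (simp add: Un_commute Un_left_commute Un_assoc)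
  moreover have "f (A \<union> \<Union>(B ` J)) - f A \<le> (\<Sum>j\<in>J. f (A \<union> B j) - f A)"
    using insert by auto
  ultimately show ?case using insert.hyps by simp
qed

theorem mainTheorem2:
  fixes V :: "'v set" and X :: "'x set"
    and f :: "('v \<times> 'x) set \<Rightarrow> real"
    and k T :: nat and C :: real
    and S :: "nat \<Rightarrow> ('v \<times> 'x) set" and xg :: "nat \<Rightarrow> 'x" and Rg :: "nat \<Rightarrow> 'v set"
  assumes finV: "finite V" and finX: "finite X"
    and k1: "k \<ge> 1" and T1: "T \<ge> 1"
    and f_empty: "f {} = 0"
    and f_nonneg: "\<And>W. W \<subseteq> V \<times> X \<Longrightarrow> f W \<ge> 0"
    and f_mono: "\<And>W1 W2. W1 \<subseteq> W2 \<Longrightarrow> W2 \<subseteq> V \<times> X \<Longrightarrow> f W1 \<le> f W2"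
    and f_submod: "\<And>W1 W2 W. W1 \<subseteq> W2 \<Longrightarrow> W2 \<subseteq> V \<times> X \<Longrightarrow> W \<subseteq> V \<times> X
                     \<Longrightarrow> marg f W W1 \<ge> marg f W W2"
    and C_pos: "C > 0"
    and C_prop: "\<And>x Sa. x \<in> X \<Longrightarrow> Sa \<subseteq> V \<times> X \<Longrightarrow>
                   \<exists>R. R \<subseteq> V \<and> card R \<le> k \<and>
                       marg f (R \<times> {x}) Sa \<ge> C * marg f (V \<times> {x}) Sa"
    and S0: "S 0 = {}"
    and x_greedy: "\<And>t. t \<in> {1..T} \<Longrightarrow> xg t \<in> X \<and>
                     (\<forall>x\<in>X. marg f (V \<times> {x}) (S (t - 1)) \<le> marg f (V \<times> {xg t}) (S (t - 1)))"
    and R_greedy: "\<And>t. t \<in> {1..T} \<Longrightarrow> Rg t \<subseteq> V \<and> card (Rg t) \<le> k \<and>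
                     (\<forall>R. R \<subseteq> V \<and> card R \<le> k \<longrightarrow>
                        marg f (R \<times> {xg t}) (S (t - 1)) \<le> marg f (Rg t \<times> {xg t}) (S (t - 1)))"
    and S_step: "\<And>t. t \<in> {1..T} \<Longrightarrow> S t = S (t - 1) \<union> (Rg t \<times> {xg t})"
  shows "\<forall>Rs :: nat \<Rightarrow> 'v set. \<forall>xs :: nat \<Rightarrow> 'x.
           (\<forall>t\<in>{1..T}. Rs t \<subseteq> V \<and> card (Rs t) \<le> k \<and> xs t \<in> X) \<and> inj_on xs {1..T}
           \<longrightarrow> f (\<Union>t\<in>{1..T}. Rs t \<times> {xs t}) \<le> 2 / (1 - exp (-2 * C)) * f (S T)"
proof (intro allI impI)
  fix Rs :: "nat \<Rightarrow> 'v set" and xs :: "nat \<Rightarrow> 'x"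
  assume H: "(\<forall>t\<in>{1..T}. Rs t \<subseteq> V \<and> card (Rs t) \<le> k \<and> xs t \<in> X) \<and> inj_on xs {1..T}"
  define U where "U = (\<Union>t\<in>{1..T}. Rs t \<times> {xs t})"
  define OPT where "OPT = f U"
  have Usub: "U \<subseteq> V \<times> X" using H unfolding U_def by auto
  have OPT0: "OPT \<ge> 0" unfolding OPT_def using f_nonneg Usub by auto
  have Ssub: "t \<le> T \<Longrightarrow> S t \<subseteq> V \<times> X" for t
  proof (induction t)
    case 0 then show ?case using S0 by simp
  next
    case (Suc t)
    then have "Suc t \<in> {1..T}" by simp
    from S_step[OF this] R_greedy[OF this] x_greedy[OF this] Suc show ?case by auto
  qed
  define a where "a t = OPT - f (S t)" for t
  define q where "q = max 0 (1 - C / T)"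
  have Tpos: "real T > 0" using T1 by simp
  have step: "a t \<le> (1 - C / T) * a (t - 1) \<and> a t \<le> a (t - 1)" if t: "t \<in> {1..T}" for t
  proof -
    let ?P = "S (t - 1)"
    have tT: "t \<le> T" using t by simp
    have Pt: "?P \<subseteq> V \<times> X" using tT by (intro Ssub) simp
    have St: "S t \<subseteq> V \<times> X" using tT by (intro Ssub)
    define D where "D = marg f (V \<times> {xg t}) ?P"
    have g: "f (S t) - f ?P = marg f (Rg t \<times> {xg t}) ?P"
      using S_step[OF t] unfolding marg_def by simp
    have gpos: "f (S t) - f ?P \<ge> 0" using f_mono[of ?P "S t"] S_step[OF t] St by auto
    obtain R where R: "R \<subseteq> V" "card R \<le> k" "marg f (R \<times> {xg t}) ?P \<ge> C * D"
      using C_prop[of "xg t" ?P] x_greedy[OF t] Pt unfolding D_def by auto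
    have CD: "C * D \<le> f (S t) - f ?P" proof -
      have "marg f (R \<times> {xg t}) ?P \<le> marg f (Rg t \<times> {xg t}) ?P"
        using R(1,2) R_greedy[OF t] by blast
      then show ?thesis using R(3) g by linarith
    qed
    have "OPT \<le> f (?P \<union> U)" unfolding OPT_def using f_mono Pt Usub by auto
    also have "f (?P \<union> U) - f ?P \<le> (\<Sum>j\<in>{1..T}. f (?P \<union> Rs j \<times> {xs j}) - f ?P)"
      unfolding U_def
      by (rule marg_union_le[where Om="V \<times> X"]) (use f_submod Pt H in auto)
    also have "\<dots> \<le> (\<Sum>j\<in>{1..T}. D)"
    proof (rule sum_mono)
      fix j assume j: "j \<in> {1..T}"
      have "f (?P \<union> Rs j \<times> {xs j}) \<le> f (?P \<union> V \<times> {xs j})"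
      proof (rule f_mono)
        have "Rs j \<subseteq> V" "xs j \<in> X" using H j by auto
        then show "?P \<union> Rs j \<times> {xs j} \<subseteq> ?P \<union> V \<times> {xs j}" 
          and "?P \<union> V \<times> {xs j} \<subseteq> V \<times> X" using Pt by auto
      qed
      also have "f (?P \<union> V \<times> {xs j}) - f ?P \<le> D"
        using x_greedy[OF t] H j unfolding D_def marg_def by auto
      finally show "f (?P \<union> Rs j \<times> {xs j}) - f ?P \<le> D" by simp
    qed
    finally have "OPT - f ?P \<le> T * D" by simp
    then have "C * (OPT - f ?P) \<le> T * (f (S t) - f ?P)"
      using CD C_pos Tpos
    proof -
      have "C * (OPT - f ?P) \<le> C * (T * D)" using \<open>OPT - f ?P \<le> T * D\<close> C_pos by simp
      also have "\<dots> = T * (C * D)" by simp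
      also have "\<dots> \<le> T * (f (S t) - f ?P)" using CD Tpos by simp
      finally show ?thesis .
    qed
    then have "(C / T) * (OPT - f ?P) \<le> f (S t) - f ?P"
      using Tpos by (simp add: field_simps)
    then show ?thesis using gpos unfolding a_def by (simp add: algebra_simps)
  qed
  have q0: "q \<ge> 0" unfolding q_def by simp
  have bound: "t \<le> T \<Longrightarrow> a t \<le> q ^ t * OPT" for t
  proof (induction t)
    case 0 then show ?case unfolding a_def using S0 f_empty by simp
  next
    case (Suc t)
    then have t: "Suc t \<in> {1..T}" by simp
    have IH: "a t \<le> q ^ t * OPT" using Suc by simp
    from step[OF t] have s1: "a (Suc t) \<le> (1 - C / T) * a t" and s2: "a (Suc t) \<le> a t" by auto
    show ?case
    proof (cases "a t > 0")
      case True
      have "a (Suc t) \<le> q * a t"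
      proof -
        have "(1 - C / T) * a t \<le> q * a t" unfolding q_def using True by (intro mult_right_mono) auto
        then show ?thesis using s1 by linarith
      qed
      also have "\<dots> \<le> q * (q ^ t * OPT)" using IH q0 by (simp add: mult_left_mono)
      finally show ?thesis by simp
    next
      case False
      have "0 \<le> q ^ Suc t * OPT" using q0 OPT0 by simp
      then show ?thesis using s2 False by linarith
    qed
  qed
  have qT: "q ^ T \<le> exp (- C)"
  proof (cases "1 - C / T \<le> 0")
    case True
    then have "q = 0" unfolding q_def by simp
    have "q ^ T = 0" using T1 \<open>q = 0\<close> by (metis One_nat_def Suc_le_eq zero_power)
    then show ?thesis by (metis exp_gt_zero less_eq_real_def)
  next
    case False
    then have qe: "q = 1 - C / T" unfolding q_def by simp
    have "q \<le> exp (- C / T)" unfolding qe using exp_ge_add_one_self[of "- C / T"] by simp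
    then have "q ^ T \<le> exp (- C / T) ^ T" using q0 power_mono by blast
    also have "\<dots> = exp (real T * (- C / T))" by (rule exp_of_nat_mult[symmetric])
    also have "\<dots> = exp (- C)" using Tpos by simp
    finally show ?thesis .
  qed
  have "OPT - f (S T) \<le> exp (- C) * OPT"
  proof -
    have "q ^ T * OPT \<le> exp (- C) * OPT" using qT OPT0 by (rule mult_right_mono)
    then show ?thesis using bound[of T] unfolding a_def by simp
  qed
  then have main: "(1 - exp (- C)) * OPT \<le> f (S T)" by (simp add: algebra_simps)
  define u where "u = exp (- C)"
  have u0: "0 < u" and u1: "u < 1" unfolding u_def using C_pos by auto
  have e2: "exp (-2 * C) = u * u" unfolding u_def by (simp add: exp_add[symmetric])
  have den: "1 - u * u > 0" using u0 u1 mult_strict_mono[of u 1 u 1] by simp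
  have "(1 - u * u) / 2 * OPT \<le> (1 - u) * OPT"
  proof (rule mult_right_mono[OF _ OPT0])
    show "(1 - u * u) / 2 \<le> 1 - u" 
    proof -
      have "(1 - u) * (1 - u) \<ge> 0" by simp
      then show ?thesis by (simp add: algebra_simps field_simps)
    qed
  qed
  then have "(1 - u * u) / 2 * OPT \<le> f (S T)" using main unfolding u_def by linarith
  then have "OPT \<le> 2 / (1 - u * u) * f (S T)" using den by (simp add: field_simps)
  then show "f (\<Union>t\<in>{1..T}. Rs t \<times> {xs t}) \<le> 2 / (1 - exp (-2 * C)) * f (S T)"
    unfolding OPT_def U_def e2 .
qed

end
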